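(* Let $\psi\colon\mathbb R^2\to\mathbb R$ be smooth and $p_\ast\in\mathbb R^2$ be such that conditions 1–7 below hold with $N=2$. Let $\Omega>0$, $\alpha,c>0$, $\varpi\in\mathbb N$, $\mathsf X:=\mathbb R^2\times\mathbb S^1\subset\mathbb R^4$. For $\varepsilon>0$ let $V_\varepsilon([p,o]):=y_\ast-\psi(p)+\varepsilon\langle\nabla\psi(p),o-o_\perp\rangle^2$, and for $a>0$, $w\in\mathbb R$ let $\bar\Sigma^a_{\mathsf X}([p,o],w):=\big((\tfrac{\alpha c}2\langle\nabla\psi(p),o\rangle+a\phi^a([p,o])+w)\,o,\ \Omega o_\perp\big)$ with $\phi^a([p,o]):=\frac1{2\pi}\int_0^{2\pi}\int_0^1(1-s)U(\tau)^2v(\tau)\langle\nabla^2\psi(p+asU(\tau)o)o,o\rangle\,\mathrm ds\,\mathrm d\tau$, $U(\tau):=\alpha\sin(\varpi\tau)$, $v(\tau):=c\sin(\varpi\tau)$. Let $(\bar\Sigma^a_{\mathsf X}V_\varepsilon)(x,w)$ denote the Lie derivative of $V_\varepsilon$ along $x\mapsto\bar\Sigma^a_{\mathsf X}(x,w)$. Then there exists $\varepsilon_2>0$ such that $(\bar\Sigma^a_{\mathsf X}V_\varepsilon)(x,w)\le\big(2a|\phi^a(x)|+2|w|-\varepsilon\Omega|\nabla\psi(p)|\big)|\nabla\psi(p)|$ for every $\varepsilon\in(0,\varepsilon_2)$, every $a>0$, every $w\in\mathbb R$ and every $x=[p,o]\in\mathsf X$.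
   Context: $\mathbb S^1$ is the unit circle in $\mathbb R^2$; for $o\in\mathbb S^1$, $o_\perp\in\mathbb S^1$ is the unique element with $(o,o_\perp)$ a positively oriented orthonormal basis of $\mathbb R^2$. Notation: $y_\ast:=\psi(p_\ast)$, $\underline y:=\inf\psi\in\mathbb R\cup\{-\infty\}$, $|\nabla^2\psi(p)|$ operator norm, $\psi^{-1}(\ge y):=\{p:\psi(p)\ge y\}$. Conditions: (1) $\psi(p)<y_\ast$ for $p\ne p_\ast$; (2) $\nabla^2\psi(p_\ast)$ negative definite; (3) there is $r_1>0$ with $\psi(p_\ast+v)=\psi(p_\ast-v)$ for $|v|\le r_1$; (4) there is $c_1>0$ with $|\nabla^2\psi(p)|\le c_1$ for all $p$; (5) $\nabla\psi(p)\ne0$ for $p\ne p_\ast$; (6) for every $y\in(\underline y,y_\ast)$, $\psi^{-1}(\ge y)$ is compact; (7) there are $c_2,r_2,r_3>0$ with $|\nabla^2\psi(p+v)|\le c_2|\nabla\psi(p)|$ for all $|p-p_\ast|\ge r_2$, $|v|\le r_3$. *)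

theory Defs
  imports "HOL-Analysis.Analysis"
begin

definition grad :: "(real^2 \<Rightarrow> real) \<Rightarrow> real^2 \<Rightarrow> real^2" where
  "grad f p = (SOME g. GDERIV f p :> g)"

definition hess :: "(real^2 \<Rightarrow> real) \<Rightarrow> real^2 \<Rightarrow> real^2 \<Rightarrow> real^2" where
  "hess f p = frechet_derivative (grad f) (at p)"

text \<open>Iterated directional derivatives; smooth = C-infinity: all iterated derivatives
  exist and are (Frechet) differentiable everywhere.\<close>
fun dirderivs :: "('a::real_normed_vector \<Rightarrow> real) \<Rightarrow> 'a list \<Rightarrow> 'a \<Rightarrow> real" where
  "dirderivs f [] = f"
| "dirderivs f (v # vs) = (\<lambda>x. frechet_derivative (dirderivs f vs) (at x) v)"

definition smooth :: "('a::real_normed_vector \<Rightarrow> real) \<Rightarrow> bool" where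
  "smooth f \<longleftrightarrow> (\<forall>vs x. dirderivs f vs differentiable (at x))"

text \<open>o_perp: (o, o_perp) positively oriented orthonormal basis.\<close>
definition perp :: "real^2 \<Rightarrow> real^2" where
  "perp u = vector [- (u$2), u$1]"

definition lie_deriv ::
  "((real^2) \<times> (real^2) \<Rightarrow> real) \<Rightarrow> ((real^2) \<times> (real^2) \<Rightarrow> (real^2) \<times> (real^2)) \<Rightarrow> (real^2) \<times> (real^2) \<Rightarrow> real" where
  "lie_deriv V F x = frechet_derivative V (at x) (F x)"

definition Vfun :: "(real^2 \<Rightarrow> real) \<Rightarrow> real \<Rightarrow> real \<Rightarrow> (real^2) \<times> (real^2) \<Rightarrow> real" where
  "Vfun \<psi> ys \<epsilon> x = (case x of (p, u) \<Rightarrow>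
      ys - \<psi> p + \<epsilon> * (grad \<psi> p \<bullet> (u - perp u))\<^sup>2)"

text \<open>phi^a([p,o]) with U(tau) = alpha sin(m tau), v(tau) = c sin(m tau).\<close>
definition phi :: "(real^2 \<Rightarrow> real) \<Rightarrow> real \<Rightarrow> real \<Rightarrow> nat \<Rightarrow> real \<Rightarrow> (real^2) \<times> (real^2) \<Rightarrow> real" where
  "phi \<psi> \<alpha> c m a x = (case x of (p, u) \<Rightarrow>
     (1 / (2 * pi)) * integral {0..2*pi} (\<lambda>\<tau>. integral {0..1} (\<lambda>s.
        (1 - s) * (\<alpha> * sin (real m * \<tau>))\<^sup>2 * (c * sin (real m * \<tau>)) *
        (hess \<psi> (p + (a * s * (\<alpha> * sin (real m * \<tau>))) *\<^sub>R u) u \<bullet> u))))"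

definition SigmaX :: "(real^2 \<Rightarrow> real) \<Rightarrow> real \<Rightarrow> real \<Rightarrow> real \<Rightarrow> nat \<Rightarrow> real \<Rightarrow> real
     \<Rightarrow> (real^2) \<times> (real^2) \<Rightarrow> (real^2) \<times> (real^2)" where
  "SigmaX \<psi> \<alpha> c \<Omega> m a w x = (case x of (p, u) \<Rightarrow>
     ((\<alpha> * c / 2 * (grad \<psi> p \<bullet> u) + a * phi \<psi> \<alpha> c m a x + w) *\<^sub>R u, \<Omega> *\<^sub>R perp u))"

end

theory Submission
  imports Defs
begin

lemma vec2_eq: "(x::real^2) = y \<longleftrightarrow> x$1 = y$1 \<and> x$2 = y$2"
  by (simp add: vec_eq_iff forall_2)

lemma perp_comp[simp]: "perp u $ 1 = - (u$2)" "perp u $ 2 = u $ 1"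
  by (simp_all add: perp_def)

lemma inner2: "(x::real^2) \<bullet> y = x$1*y$1 + x$2*y$2"
  by (simp add: inner_vec_def sum_2)

lemma norm2sq: "(norm (x::real^2))\<^sup>2 = (x$1)\<^sup>2 + (x$2)\<^sup>2"
  unfolding power2_norm_eq_inner inner2 by (simp add: power2_eq_square)

lemma linear_perp: "linear perp"
  by (rule linearI) (simp_all add: vec2_eq algebra_simps)

lemma bounded_linear_perp: "bounded_linear perp"
  using linear_perp linear_conv_bounded_linear by blast

lemma perp_perp: "perp (perp u) = - u"
  by (simp add: vec2_eq)

lemma norm_perp: "norm (perp u) = norm u"
proof -
  have "(norm (perp u))\<^sup>2 = (norm u)\<^sup>2" by (simp add: norm2sq)
  then show ?thesis by (simp add: power2_eq_iff_nonneg)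
qed

lemma inner_sq_sum: "(g \<bullet> u)\<^sup>2 + (g \<bullet> perp u)\<^sup>2 = (norm g)\<^sup>2 * (norm u)\<^sup>2"
  unfolding norm2sq inner2 perp_comp by algebra

lemma grad_expand: "(x::real^2) = x$1 *\<^sub>R axis 1 1 + x$2 *\<^sub>R axis 2 1"
  by (simp add: vec2_eq axis_def)

lemma gradient_exists:
  assumes "(f has_derivative D) (at p)"
  shows "\<exists>g::real^2. D = (\<lambda>h. h \<bullet> g)"
proof -
  have lin: "linear D" using assms has_derivative_linear by blast
  define g :: "real^2" where "g = vector [D (axis 1 1), D (axis 2 1)]"
  have "D h = h \<bullet> g" for h
  proof -
    have "D h = D (h$1 *\<^sub>R axis 1 1 + h$2 *\<^sub>R axis 2 1)" using grad_expand[of h] by simp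
    also have "\<dots> = h$1 * D (axis 1 1) + h$2 * D (axis 2 1)"
      using lin by (simp add: linear_add linear_scale)
    finally show ?thesis by (simp add: g_def inner2)
  qed
  then show ?thesis by blast
qed

lemma grad_has:
  assumes "\<psi> differentiable (at p)"
  shows "(\<psi> has_derivative (\<lambda>h. h \<bullet> grad \<psi> p)) (at p)"
proof -
  obtain D where D: "(\<psi> has_derivative D) (at p)" using assms differentiable_def by blast
  obtain g where "D = (\<lambda>h. h \<bullet> g)" using gradient_exists[OF D] by blast
  then have "GDERIV \<psi> p :> g" using D by (simp add: gderiv_def)
  then have "GDERIV \<psi> p :> grad \<psi> p" unfolding grad_def by (rule someI)
  then show ?thesis by (simp add: gderiv_def)
qed

lemma smooth_diff: "smooth \<psi> \<Longrightarrow> \<psi> differentiable (at p)"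
  unfolding smooth_def by (metis dirderivs.simps(1))

lemma grad_comp:
  assumes "smooth \<psi>"
  shows "grad \<psi> p $ i = dirderivs \<psi> [axis i 1] p"
proof -
  have "(\<lambda>h. h \<bullet> grad \<psi> p) = frechet_derivative \<psi> (at p)"
    using grad_has[OF smooth_diff[OF assms]] frechet_derivative_at by blast
  then have "frechet_derivative \<psi> (at p) (axis i 1) = grad \<psi> p $ i"
    by (metis inner_axis' mult_1 inner_real_def)
  then show ?thesis by simp
qed

lemma grad_differentiable:
  assumes "smooth \<psi>"
  shows "grad \<psi> differentiable (at p)"
proof -
  have e: "grad \<psi> = (\<lambda>q. dirderivs \<psi> [axis 1 1] q *\<^sub>R axis 1 1 + dirderivs \<psi> [axis 2 1] q *\<^sub>R axis 2 1)"
    apply (rule ext)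
    apply (subst grad_expand)
    by (simp add: grad_comp[OF assms])
  have d: "dirderivs \<psi> vs differentiable (at p)" for vs using assms smooth_def by blast
  show ?thesis unfolding e
    by (intro differentiable_add differentiable_scaleR differentiable_const d)
qed

lemma hess_has:
  assumes "smooth \<psi>"
  shows "(grad \<psi> has_derivative hess \<psi> p) (at p)"
  unfolding hess_def using grad_differentiable[OF assms] frechet_derivative_works by blast

lemma V_has_deriv:
  assumes sm: "smooth \<psi>"
  shows "(Vfun \<psi> y \<epsilon> has_derivative (\<lambda>d. - (fst d \<bullet> grad \<psi> p) + \<epsilon> * (2 * (grad \<psi> p \<bullet> (u - perp u)) *
      (hess \<psi> p (fst d) \<bullet> (u - perp u) + grad \<psi> p \<bullet> (snd d - perp (snd d)))))) (at (p, u))"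
proof -
  have eV: "Vfun \<psi> y \<epsilon> = (\<lambda>x. y - \<psi> (fst x) + \<epsilon> * (grad \<psi> (fst x) \<bullet> (snd x - perp (snd x)))\<^sup>2)"
    by (rule ext) (simp add: Vfun_def split: prod.splits)
  have fst: "(fst has_derivative fst) (at (p,u))" by (rule bounded_linear.has_derivative[OF bounded_linear_fst has_derivative_ident, simplified])
  have h1: "((\<lambda>x. \<psi> (fst x)) has_derivative (\<lambda>d. fst d \<bullet> grad \<psi> p)) (at (p,u))"
    using has_derivative_compose[OF fst grad_has[OF smooth_diff[OF sm]]] by simp
  have h2: "((\<lambda>x. grad \<psi> (fst x)) has_derivative (\<lambda>d. hess \<psi> p (fst d))) (at (p,u))"
    using has_derivative_compose[OF fst hess_has[OF sm]] by simp
  have bl: "bounded_linear (\<lambda>x::(real^2)\<times>(real^2). snd x - perp (snd x))"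
    by (intro bounded_linear_sub bounded_linear_snd bounded_linear_compose[OF bounded_linear_perp])
  have h3: "((\<lambda>x::(real^2)\<times>(real^2). snd x - perp (snd x)) has_derivative (\<lambda>d. snd d - perp (snd d))) (at (p,u))"
    using bounded_linear.has_derivative[OF bl has_derivative_ident] by simp
  have h4: "((\<lambda>x. grad \<psi> (fst x) \<bullet> (snd x - perp (snd x))) has_derivative
     (\<lambda>d. grad \<psi> p \<bullet> (snd d - perp (snd d)) + hess \<psi> p (fst d) \<bullet> (u - perp u))) (at (p,u))"
    using has_derivative_inner[OF h2 h3] by simp
  note h5 = has_derivative_power[OF h4, of 2]
  note h6 = has_derivative_mult_right[OF h5, of \<epsilon>]
  note h7 = has_derivative_diff[OF has_derivative_const[of y] h1]
  note h8 = has_derivative_add[OF h7 h6]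
  show ?thesis unfolding eV
    apply (rule has_derivative_eq_rhs[OF h8])
    by (auto simp: algebra_simps)
qed
lemma arith_main:
  fixes A B N h e \<beta> \<epsilon> C K \<Omega> :: real
  assumes N: "N \<ge> 0" "A\<^sup>2 + B\<^sup>2 = N\<^sup>2" and h: "\<bar>h\<bar> \<le> 2 * C" and C: "C > 0"
    and \<Omega>: "\<Omega> > 0" and b: "\<beta> > 0" and K: "K = 4 * \<beta> * C"
    and e1: "\<epsilon> > 0" "8 * \<epsilon> * C \<le> 1"
    and e2: "\<epsilon> * (K + K\<^sup>2 / (4 * \<Omega>) + 3 * \<Omega>) \<le> \<beta>"
  shows "- ((\<beta> * A + e) * A) + \<epsilon> * (2 * (A - B) * ((\<beta> * A + e) * h + \<Omega> * (A + B)))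
    \<le> (2 * \<bar>e\<bar> - \<epsilon> * \<Omega> * N) * N"
proof -
  have aA: "\<bar>A\<bar> \<le> N" using N by (metis abs_le_square_iff abs_of_nonneg le_add_same_cancel1 zero_le_power2)
  have aB: "\<bar>B\<bar> \<le> N" using N by (metis abs_le_square_iff abs_of_nonneg le_add_same_cancel2 zero_le_power2)
  have AB: "\<bar>A - B\<bar> \<le> 2 * N" using aA aB by linarith
  have P1: "- (e * A) \<le> \<bar>e\<bar> * N"
    by (metis aA abs_ge_minus_self abs_minus abs_mult abs_ge_zero mult_left_mono order_trans minus_mult_right)
  have "\<bar>2 * \<epsilon> * (A - B) * e * h\<bar> = 2 * \<epsilon> * \<bar>A - B\<bar> * \<bar>e\<bar> * \<bar>h\<bar>"
    using e1 by (simp add: abs_mult)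
  also have "\<dots> \<le> 2 * \<epsilon> * (2 * N) * \<bar>e\<bar> * (2 * C)"
    using e1 AB h by (intro mult_mono mult_left_mono) auto
  also have "\<dots> = (8 * \<epsilon> * C) * (\<bar>e\<bar> * N)" by simp
  also have "\<dots> \<le> 1 * (\<bar>e\<bar> * N)" using e1 N by (intro mult_right_mono) auto
  finally have P2: "2 * \<epsilon> * (A - B) * e * h \<le> \<bar>e\<bar> * N" by simp
  have "2 * \<epsilon> * (A - B) * (\<beta> * A) * h \<le> \<bar>2 * \<epsilon> * (A - B) * (\<beta> * A) * h\<bar>" by simp
  also have "\<dots> = 2 * \<epsilon> * \<beta> * (\<bar>A - B\<bar> * \<bar>A\<bar>) * \<bar>h\<bar>"
    using e1 b by (simp add: abs_mult)
  also have "\<dots> \<le> 2 * \<epsilon> * \<beta> * ((\<bar>A\<bar> + \<bar>B\<bar>) * \<bar>A\<bar>) * (2 * C)"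
    using e1 b h by (intro mult_mono mult_left_mono) auto
  also have "\<dots> = \<epsilon> * K * (A\<^sup>2 + \<bar>A\<bar> * \<bar>B\<bar>)" by (simp add: K power2_eq_square algebra_simps)
  finally have P3: "2 * \<epsilon> * (A - B) * (\<beta> * A) * h \<le> \<epsilon> * K * (A\<^sup>2 + \<bar>A\<bar> * \<bar>B\<bar>)" .
  have sq: "K * a * b \<le> \<Omega> * b\<^sup>2 + K\<^sup>2 / (4 * \<Omega>) * a\<^sup>2" for a b :: real
  proof -
    have "0 \<le> (2 * \<Omega> * b - K * a)\<^sup>2" by simp
    then have "4 * \<Omega> * (K * a * b) \<le> 4 * \<Omega> * (\<Omega> * b\<^sup>2 + K\<^sup>2 / (4 * \<Omega>) * a\<^sup>2)"
      using \<Omega> by (simp add: power2_eq_square algebra_simps)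
    then show ?thesis using \<Omega> by simp
  qed
  have "K * \<bar>A\<bar> * \<bar>B\<bar> \<le> \<Omega> * B\<^sup>2 + K\<^sup>2 / (4 * \<Omega>) * A\<^sup>2" using sq[of "\<bar>A\<bar>" "\<bar>B\<bar>"] by simp
  then have P4: "\<epsilon> * (K * \<bar>A\<bar> * \<bar>B\<bar>) \<le> \<epsilon> * (\<Omega> * B\<^sup>2 + K\<^sup>2 / (4 * \<Omega>) * A\<^sup>2)"
    using e1 by (intro mult_left_mono) auto
  have P5: "A\<^sup>2 * (\<epsilon> * (K + K\<^sup>2 / (4 * \<Omega>) + 3 * \<Omega>)) \<le> A\<^sup>2 * \<beta>"
    using e2 by (intro mult_left_mono) auto
  have eq: "- ((\<beta> * A + e) * A) + \<epsilon> * (2 * (A - B) * ((\<beta> * A + e) * h + \<Omega> * (A + B)))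
    = - (\<beta> * A\<^sup>2) - e * A + 2 * \<epsilon> * (A - B) * e * h + 2 * \<epsilon> * (A - B) * (\<beta> * A) * h
      + 2 * \<epsilon> * \<Omega> * (A\<^sup>2 - B\<^sup>2)"
    by (simp add: power2_eq_square algebra_simps)
  have rhs: "(2 * \<bar>e\<bar> - \<epsilon> * \<Omega> * N) * N = 2 * (\<bar>e\<bar> * N) - \<epsilon> * \<Omega> * (A\<^sup>2 + B\<^sup>2)"
    using N by (simp add: power2_eq_square algebra_simps)
  show ?thesis unfolding eq rhs
    using P1 P2 P3 P4 P5 by (simp add: algebra_simps)
qed
theorem lemma2:
  fixes \<psi> :: "real^2 \<Rightarrow> real" and ps :: "real^2"
    and \<Omega> \<alpha> c :: real and m :: nat
  assumes smooth: "smooth \<psi>"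
    and C1: "\<forall>p. p \<noteq> ps \<longrightarrow> \<psi> p < \<psi> ps"
    and C2: "\<forall>v. v \<noteq> 0 \<longrightarrow> hess \<psi> ps v \<bullet> v < 0"
    and C3: "\<exists>r1>0. \<forall>v. norm v \<le> r1 \<longrightarrow> \<psi> (ps + v) = \<psi> (ps - v)"
    and C4: "\<exists>c1>0. \<forall>p. onorm (hess \<psi> p) \<le> c1"
    and C5: "\<forall>p. p \<noteq> ps \<longrightarrow> grad \<psi> p \<noteq> 0"
    and C6: "\<forall>y. (INF p. ereal (\<psi> p)) < ereal y \<and> y < \<psi> ps \<longrightarrow> compact {p. \<psi> p \<ge> y}"
    and C7: "\<exists>c2>0. \<exists>r2>0. \<exists>r3>0. \<forall>p v. norm (p - ps) \<ge> r2 \<and> norm v \<le> r3 \<longrightarrow>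
               onorm (hess \<psi> (p + v)) \<le> c2 * norm (grad \<psi> p)"
    and \<Omega>: "\<Omega> > 0" and \<alpha>: "\<alpha> > 0" and c: "c > 0"
  shows "\<exists>\<epsilon>2>0. \<forall>\<epsilon> a w p u. 0 < \<epsilon> \<and> \<epsilon> < \<epsilon>2 \<and> a > 0 \<and> norm u = 1 \<longrightarrow>
     lie_deriv (Vfun \<psi> (\<psi> ps) \<epsilon>) (SigmaX \<psi> \<alpha> c \<Omega> m a w) (p, u)
       \<le> (2 * a * \<bar>phi \<psi> \<alpha> c m a (p, u)\<bar> + 2 * \<bar>w\<bar> - \<epsilon> * \<Omega> * norm (grad \<psi> p))
          * norm (grad \<psi> p)"
proof -
  obtain C where C: "C > 0" "\<And>p. onorm (hess \<psi> p) \<le> C" using C4 by blast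
  define \<beta> where "\<beta> = \<alpha> * c / 2"
  have b: "\<beta> > 0" using \<alpha> c by (simp add: \<beta>_def)
  define K where "K = 4 * \<beta> * C"
  have K0: "K > 0" using b C by (simp add: K_def)
  define L where "L = K + K\<^sup>2 / (4 * \<Omega>) + 3 * \<Omega>"
  have L0: "L > 0" using K0 \<Omega> by (simp add: L_def add_pos_pos)
  define \<epsilon>2 where "\<epsilon>2 = min (1 / (8 * C)) (\<beta> / L)"
  have "\<epsilon>2 > 0" using C b L0 by (simp add: \<epsilon>2_def)
  moreover have "lie_deriv (Vfun \<psi> (\<psi> ps) \<epsilon>) (SigmaX \<psi> \<alpha> c \<Omega> m a w) (p, u)
       \<le> (2 * a * \<bar>phi \<psi> \<alpha> c m a (p, u)\<bar> + 2 * \<bar>w\<bar> - \<epsilon> * \<Omega> * norm (grad \<psi> p))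
          * norm (grad \<psi> p)"
    if e: "0 < \<epsilon>" "\<epsilon> < \<epsilon>2" and a: "a > 0" and u: "norm u = 1" for \<epsilon> a w p u
  proof -
    define g where "g = grad \<psi> p"
    define H where "H = hess \<psi> p"
    define A where "A = g \<bullet> u"
    define B where "B = g \<bullet> perp u"
    define e where "e = a * phi \<psi> \<alpha> c m a (p, u) + w"
    define h where "h = H u \<bullet> (u - perp u)"
    have blH: "bounded_linear H" unfolding H_def using hess_has[OF smooth] has_derivative_bounded_linear by blast
    have "\<bar>h\<bar> \<le> norm (H u) * norm (u - perp u)" unfolding h_def by (rule Cauchy_Schwarz_ineq2)
    also have "\<dots> \<le> (onorm H * norm u) * (norm u + norm (perp u))"
      by (intro mult_mono onorm[OF blH] norm_triangle_ineq4) (auto intro: onorm_pos_le[OF blH] mult_nonneg_nonneg)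
    also have "\<dots> = 2 * onorm H" using u by (simp add: norm_perp)
    also have "\<dots> \<le> 2 * C" using C unfolding H_def by simp
    finally have hb: "\<bar>h\<bar> \<le> 2 * C" .
    have Sig: "SigmaX \<psi> \<alpha> c \<Omega> m a w (p, u) = ((\<beta> * A + e) *\<^sub>R u, \<Omega> *\<^sub>R perp u)"
      by (simp add: SigmaX_def \<beta>_def A_def e_def g_def inner_commute)
    have lie: "lie_deriv (Vfun \<psi> (\<psi> ps) \<epsilon>) (SigmaX \<psi> \<alpha> c \<Omega> m a w) (p, u)
      = - ((\<beta> * A + e) * A) + \<epsilon> * (2 * (A - B) * ((\<beta> * A + e) * h + \<Omega> * (A + B)))"
    proof -
      have fd: "frechet_derivative (Vfun \<psi> (\<psi> ps) \<epsilon>) (at (p, u)) = (\<lambda>d. - (fst d \<bullet> grad \<psi> p) + \<epsilon> * (2 * (grad \<psi> p \<bullet> (u - perp u)) *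
      (hess \<psi> p (fst d) \<bullet> (u - perp u) + grad \<psi> p \<bullet> (snd d - perp (snd d)))))"
        using frechet_derivative_at[OF V_has_deriv[OF smooth]] by metis
      have Hs: "H ((\<beta> * A + e) *\<^sub>R u) = (\<beta> * A + e) *\<^sub>R H u" using blH by (simp add: linear_simps)
      have pp: "perp (\<Omega> *\<^sub>R perp u) = - (\<Omega> *\<^sub>R u)"
        using linear_cmul[OF linear_perp] perp_perp by simp
      show ?thesis unfolding lie_deriv_def fd Sig
        using Hs pp
        by (simp add: H_def[symmetric] g_def[symmetric] A_def B_def h_def inner_diff_right inner_add_right algebra_simps inner_commute)
    qed
    have N: "A\<^sup>2 + B\<^sup>2 = (norm g)\<^sup>2" using inner_sq_sum[of g u] u by (simp add: A_def B_def)
    have e1: "8 * \<epsilon> * C \<le> 1" using e C by (simp add: \<epsilon>2_def field_simps)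
    have e2: "\<epsilon> * L \<le> \<beta>" using e L0 by (simp add: \<epsilon>2_def field_simps)
    note main = arith_main[where e=e, OF norm_ge_zero N hb C(1) \<Omega> b K_def e(1) e1 e2[unfolded L_def]]
    have t1: "\<bar>e\<bar> \<le> \<bar>a * phi \<psi> \<alpha> c m a (p, u)\<bar> + \<bar>w\<bar>" unfolding e_def by (rule abs_triangle_ineq)
    have t2: "\<bar>a * phi \<psi> \<alpha> c m a (p, u)\<bar> = a * \<bar>phi \<psi> \<alpha> c m a (p, u)\<bar>" using a by (simp add: abs_mult)
    have "2 * \<bar>e\<bar> \<le> 2 * a * \<bar>phi \<psi> \<alpha> c m a (p, u)\<bar> + 2 * \<bar>w\<bar>"
      using t1 t2 by linarith
    then have "(2 * \<bar>e\<bar> - \<epsilon> * \<Omega> * norm g) * norm g \<le> (2 * a * \<bar>phi \<psi> \<alpha> c m a (p, u)\<bar> + 2 * \<bar>w\<bar> - \<epsilon> * \<Omega> * norm g) * norm g"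
      by (intro mult_right_mono) auto
    then show ?thesis using main lie unfolding g_def by linarith
  qed
  ultimately show ?thesis by blast
qed
end
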